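(* For integers $m,n\ge0$ let $u_{m,n}(x)=\exp\big(-\tfrac{x^4}{12}+\tfrac{m-n}{2}x^2\big)S_{(n^m)}(x,\tfrac16,0,0,\ldots)$. Then $$\big(D_x^2-xD_x+m+2n+1\big)u_{m,n+1}\cdot u_{m,n}=0,\quad \big(D_x^2-xD_x+m-n\big)u_{m+1,n}\cdot u_{m,n+1}=0,\quad \big(D_x^2-xD_x-2m-n-1\big)u_{m,n}\cdot u_{m+1,n}=0.$$ Namely, the triple $(\tau_0,\tau_1,\tau_2)=(u_{m,n},u_{m+1,n},u_{m,n+1})$ solves $\big(D_x^2-xD_x-\frac{\alpha_i-\alpha_{i+1}}{3}\big)\tau_i\cdot\tau_{i+1}=0$ ($i=0,1,2$, indices mod 3) with $(\alpha_0,\alpha_1,\alpha_2)=(3(m+n+1),-3m,-3n)$.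
   Context: $(n^m)$ is the rectangular partition with $m$ parts equal to $n$. Schur functions: $S_\lambda(t)=\det(p_{\lambda_i-i+j}(t))_{1\le i,j\le l(\lambda)}$ with $\sum_{n\ge0}p_n(t)z^n=\exp(\sum_{k\ge1}t_kz^k)$, $p_n=0$ for $n<0$, $S_\emptyset=1$. Hirota operators: $D_xF\cdot G=F'G-FG'$, $D_x^2F\cdot G=F''G-2F'G'+FG''$. *)

theory Defs
  imports Complex_Main "HOL-Analysis.Derivative" "HOL-Computational_Algebra.Formal_Power_Series"
    "Jordan_Normal_Form.Determinant"
begin

text \<open>Elementary Schur polynomials p_k at t = (x, 1/6, 0, 0, ...):
  sum_k p_k z^k = exp(x z + z^2/6) = exp(x z) * exp(z^2/6), with p_k = 0 for k < 0.\<close>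
definition p_elem :: "int \<Rightarrow> real \<Rightarrow> real" where
  "p_elem k x = (if k < 0 then 0
     else fps_nth (fps_exp x * (fps_exp (1/6) oo fps_X ^ 2)) (nat k))"

text \<open>Schur function of the rectangular partition (n^m) (m parts equal to n) at
  t = (x, 1/6, 0, ...): the m x m determinant det(p_{lambda_i - i + j}); empty det = 1.\<close>
definition schur_rect :: "nat \<Rightarrow> nat \<Rightarrow> real \<Rightarrow> real" where
  "schur_rect m n x = det (mat m m (\<lambda>(i, j). p_elem (int n - int i + int j) x))"

definition u_fun :: "nat \<Rightarrow> nat \<Rightarrow> real \<Rightarrow> real" where
  "u_fun m n x = exp (- (x ^ 4) / 12 + (real m - real n) / 2 * x ^ 2) * schur_rect m n x"

text \<open>(D_x^2 - x D_x + c) F . G evaluated at x.\<close>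
definition hirota_op :: "real \<Rightarrow> (real \<Rightarrow> real) \<Rightarrow> (real \<Rightarrow> real) \<Rightarrow> real \<Rightarrow> real" where
  "hirota_op c F G x =
     deriv (deriv F) x * G x - 2 * deriv F x * deriv G x + F x * deriv (deriv G) x
     - x * (deriv F x * G x - F x * deriv G x) + c * F x * G x"

end

theory Submission
  imports Defs
begin


definition Fs :: "real \<Rightarrow> real fps" where
  "Fs x = fps_exp x * (fps_exp (1/6) oo fps_X ^ 2)"

lemma Fs_deriv: "fps_deriv (Fs x) = fps_const x * Fs x + fps_const (1/3) * (fps_X * Fs x)"
proof -
  have c0: "fps_nth (fps_X ^ 2 :: real fps) 0 = 0" by simp
  have "fps_deriv (fps_exp (1/6) oo fps_X ^ 2) = (fps_deriv (fps_exp (1/6)) oo fps_X^2) * fps_deriv (fps_X ^ 2 :: real fps)"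
    by (rule fps_compose_deriv[OF c0])
  also have "\<dots> = ((fps_const (1/6) * fps_exp (1/6)) oo fps_X^2) * (2 * fps_X)"
    by (simp add: fps_deriv_power numeral_fps_const)
  also have "\<dots> = fps_const (1/3) * fps_X * (fps_exp (1/6) oo fps_X^2)"
    by (simp add: fps_compose_mult_distrib[OF c0] fps_const_compose numeral_fps_const)
  finally have "fps_deriv (fps_exp (1/6) oo fps_X ^ 2) = fps_const (1/3::real) * fps_X * (fps_exp (1/6) oo fps_X^2)" .
  then show ?thesis unfolding Fs_def by (simp add: algebra_simps)
qed

lemma Fs_0: "fps_nth (Fs x) (0) = 1" unfolding Fs_def by simp

lemma Fs_1: "fps_nth (Fs x) (Suc 0) = x"
proof -
  have "fps_nth (fps_deriv (Fs x)) 0 = x" unfolding Fs_deriv by (simp add: Fs_0)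
  thus ?thesis by simp
qed

lemma Fs_rec: "(real k + 2) * fps_nth (Fs x) (Suc (Suc k)) = x * fps_nth (Fs x) (Suc k) + (1/3) * fps_nth (Fs x) (k)"
proof -
  have "fps_nth (fps_deriv (Fs x)) (Suc k) = x * fps_nth (Fs x) (Suc k) + (1/3) * fps_nth (Fs x) (k)" unfolding Fs_deriv by simp
  thus ?thesis by (simp add: algebra_simps)
qed

fun Pn :: "nat \<Rightarrow> real poly" where
  "Pn 0 = 1"
| "Pn (Suc 0) = [:0,1:]"
| "Pn (Suc (Suc k)) = smult (1/(real k + 2)) ([:0,1:] * Pn (Suc k) + smult (1/3) (Pn k))"

lemma poly_Pn: "poly (Pn k) x = fps_nth (Fs x) (k)"
proof (induction k rule: Pn.induct)
  case 1 then show ?case by (simp add: Fs_0)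
next
  case 2 then show ?case by (simp add: Fs_1)
next
  case (3 k)
  have "poly (Pn (Suc (Suc k))) x = (x * fps_nth (Fs x) (Suc k) + (1/3) * fps_nth (Fs x) (k)) / (real k + 2)"
    using 3 by (simp add: field_simps)
  also have "\<dots> = fps_nth (Fs x) (Suc (Suc k))" using Fs_rec[of k x]
    by (simp add: field_simps)
  finally show ?case .
qed

definition Pi :: "int \<Rightarrow> real poly" where
  "Pi k = (if k < 0 then 0 else Pn (nat k))"

lemma poly_Pi: "poly (Pi k) x = p_elem k x"
  unfolding Pi_def p_elem_def using poly_Pn[of "nat k" x] by (simp add: Fs_def)

lemma Pi_rec: "smult (of_int (k+1)) (Pi (k+1)) = [:0,1:] * Pi k + smult (1/3) (Pi (k-1))"
proof (cases "k \<le> -2")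
  case True then show ?thesis by (simp add: Pi_def)
next
  case False
  have "k = -1 \<or> k = 0 \<or> k \<ge> 1" using False by linarith
  then consider "k = -1" | "k = 0" | j where "k = int (Suc j)"
  proof -
    assume h1: "k = -1 \<Longrightarrow> thesis" and h2: "k = 0 \<Longrightarrow> thesis" and h3: "\<And>j. k = int (Suc j) \<Longrightarrow> thesis"
    show thesis
    proof (cases "k \<ge> 1")
      case True
      then have "k = int (Suc (nat (k - 1)))" by simp
      then show thesis by (rule h3)
    qed (use \<open>k = -1 \<or> k = 0 \<or> k \<ge> 1\<close> h1 h2 in auto)
  qed
  then show ?thesis
  proof cases
    case 1 then show ?thesis by (simp add: Pi_def)
  next
    case 2 then show ?thesis by (simp add: Pi_def)
  next
    case 3
    have a: "Pi (k+1) = Pn (Suc (Suc j))" using 3 by (simp add: Pi_def nat_add_distrib)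
    have b: "Pi k = Pn (Suc j)" using 3 by (simp add: Pi_def nat_add_distrib)
    have c: "Pi (k-1) = Pn j" using 3 by (simp add: Pi_def)
    have d: "of_int (k+1) = (real j + 2)" using 3 by simp
    show ?thesis unfolding a b c d by simp
  qed
qed

lemma Pi_neg: "k < 0 \<Longrightarrow> Pi k = 0" by (simp add: Pi_def)

lemma Pi_deriv_nat: "pderiv (Pi (int j)) = Pi (int j - 1)"
proof (induction j rule: Pn.induct)
  case 1 then show ?case by (simp add: Pi_def)
next
  case 2 then show ?case by (simp add: Pi_def pderiv_pCons)
next
  case (3 j)
  have e: "Pi (int (Suc (Suc j))) = smult (1/(real j + 2)) ([:0,1:] * Pi (int (Suc j)) + smult (1/3) (Pi (int j)))"
    by (simp add: Pi_def nat_add_distrib)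
  have r: "smult (of_int (int j + 1)) (Pi (int j + 1)) = [:0,1:] * Pi (int j) + smult (1/3) (Pi (int j - 1))"
    by (rule Pi_rec)
  have "pderiv (Pi (int (Suc (Suc j)))) = smult (1/(real j + 2)) (Pi (int (Suc j)) + ([:0,1:] * Pi (int j) + smult (1/3) (Pi (int j - 1))))"
    unfolding e using 3 by (simp add: pderiv_mult pderiv_smult pderiv_add pderiv_pCons algebra_simps)
  also have "\<dots> = smult (1/(real j + 2)) (smult (real j + 2) (Pi (int (Suc j))))"
    unfolding r[symmetric] by (simp add: smult_add_left algebra_simps numeral_mult_conv_smult)
  also have "\<dots> = Pi (int (Suc j))" by simp
  finally show ?case by simp
qed

lemma Pi_deriv: "pderiv (Pi k) = Pi (k - 1)"
proof (cases "k < 0")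
  case True then show ?thesis by (simp add: Pi_def)
next
  case False
  then obtain j where "k = int j" by (metis nonneg_int_cases not_less)
  then show ?thesis using Pi_deriv_nat by simp
qed

lemma Pi_Y: "Pi (k - 2) = smult 3 (smult (of_int k) (Pi k) - [:0,1:] * Pi (k - 1))"
proof -
  have "smult (of_int (k-1+1)) (Pi (k-1+1)) = [:0,1:] * Pi (k-1) + smult (1/3) (Pi (k-1-1))"
    by (rule Pi_rec)
  then have "smult (1/3) (Pi (k-2)) = smult (of_int k) (Pi k) - [:0,1:] * Pi (k-1)"
    by (simp add: algebra_simps)
  then have "smult 3 (smult (1/3) (Pi (k-2))) = smult 3 (smult (of_int k) (Pi k) - [:0,1:] * Pi (k-1))"
    by simp
  then show ?thesis by simp
qed


definition Dt :: "nat \<Rightarrow> (nat \<Rightarrow> nat \<Rightarrow> 'a::comm_ring_1) \<Rightarrow> 'a" where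
  "Dt N V = det (mat N N (\<lambda>(i,j). V i j))"

abbreviation "perms N \<equiv> {p. p permutes {0..<N}}"

lemma Dt_leibniz: "Dt N V = (\<Sum>p\<in>perms N. signof p * (\<Prod>i=0..<N. V i (p i)))"
  unfolding Dt_def det_def
  by (auto intro!: sum.cong prod.cong simp: permutes_in_image)

lemma Dt_cong: "(\<And>i j. i < N \<Longrightarrow> j < N \<Longrightarrow> V i j = V' i j) \<Longrightarrow> Dt N V = Dt N V'"
  unfolding Dt_def by (auto intro!: arg_cong[of _ _ det] eq_matI)

lemma Dt_upd: assumes k: "k < N"
  shows "Dt N (V(k := W)) = (\<Sum>p\<in>perms N. signof p * (W (p k) * (\<Prod>i\<in>{0..<N}-{k}. V i (p i))))"
proof -
  have "(\<Prod>i=0..<N. (V(k := W)) i (p i)) = W (p k) * (\<Prod>i\<in>{0..<N}-{k}. V i (p i))" for p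
  proof -
    have "(\<Prod>i=0..<N. (V(k := W)) i (p i)) = (V(k := W)) k (p k) * (\<Prod>i\<in>{0..<N}-{k}. (V(k := W)) i (p i))"
      by (rule prod.remove) (use k in auto)
    also have "(\<Prod>i\<in>{0..<N}-{k}. (V(k := W)) i (p i)) = (\<Prod>i\<in>{0..<N}-{k}. V i (p i))"
      by (rule prod.cong) auto
    finally show ?thesis by simp
  qed
  then show ?thesis unfolding Dt_leibniz by simp
qed

lemma Dt_full: assumes k: "k < N"
  shows "Dt N V = (\<Sum>p\<in>perms N. signof p * (V k (p k) * (\<Prod>i\<in>{0..<N}-{k}. V i (p i))))"
proof -
  have "V = V(k := V k)" by simp
  then have "Dt N V = Dt N (V(k := V k))" by simp
  also have "\<dots> = (\<Sum>p\<in>perms N. signof p * (V k (p k) * (\<Prod>i\<in>{0..<N}-{k}. V i (p i))))" by (rule Dt_upd[OF k])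
  finally show ?thesis .
qed

lemma Dt_upd_sum: assumes k: "k < N" and S: "finite S"
  shows "Dt N (V(k := (\<lambda>j. \<Sum>s\<in>S. f s * W s j))) = (\<Sum>s\<in>S. f s * Dt N (V(k := W s)))"
  unfolding Dt_upd[OF k]
  by (simp add: sum_distrib_left sum_distrib_right sum.swap[of _ S] mult_ac)

lemma Dt_upd_lin: assumes k: "k < N"
  shows "Dt N (V(k := (\<lambda>j. a * W1 j + b * W2 j))) = a * Dt N (V(k := W1)) + b * Dt N (V(k := W2))"
  unfolding Dt_upd[OF k]
  by (simp add: sum_distrib_left sum.distrib[symmetric] algebra_simps)

lemma Dt_upd_smult: assumes k: "k < N"
  shows "Dt N (V(k := (\<lambda>j. a * W1 j))) = a * Dt N (V(k := W1))"
  unfolding Dt_upd[OF k]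
  by (simp add: sum_distrib_left algebra_simps)

lemma Dt_dup: assumes "i < N" "l < N" "i \<noteq> l" "\<And>j. j < N \<Longrightarrow> V i j = V l j"
  shows "Dt N V = 0"
  unfolding Dt_def
  by (rule det_identical_rows[of _ N i l]) (use assms in \<open>auto intro!: eq_vecI\<close>)

lemma Dt_perm: assumes p: "p permutes {0..<N}"
  shows "Dt N (\<lambda>i. V (p i)) = signof p * Dt N V"
proof -
  have "Dt N (\<lambda>i. V (p i)) = det (mat N N (\<lambda>(i,j). mat N N (\<lambda>(i,j). V i j) $$ (p i, j)))"
    unfolding Dt_def using p by (auto intro!: arg_cong[of _ _ det] eq_matI simp: permutes_in_image)
  also have "\<dots> = signof p * Dt N V" unfolding Dt_def
    by (rule det_permute_rows[OF _ p]) auto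
  finally show ?thesis .
qed

lemma pderiv_sum: "pderiv (sum f S) = (\<Sum>s\<in>S. pderiv (f s))"
  by (induction S rule: infinite_finite_induct) (auto simp: pderiv_add)

lemma pderiv_signof: "pderiv (signof p * (q :: real poly)) = signof p * pderiv q"
  by (simp add: sign_def pderiv_minus)

lemma Dt_pderiv:
  fixes V :: "nat \<Rightarrow> nat \<Rightarrow> real poly"
  shows "pderiv (Dt N V) = (\<Sum>k<N. Dt N (V(k := (\<lambda>j. pderiv (V k j)))))"
proof -
  have "pderiv (Dt N V) = (\<Sum>p\<in>perms N. signof p * pderiv (\<Prod>i=0..<N. V i (p i)))"
    unfolding Dt_leibniz pderiv_sum
    by (auto intro!: sum.cong simp: pderiv_signof)
  also have "\<dots> = (\<Sum>p\<in>perms N. \<Sum>k\<in>{0..<N}. signof p * (pderiv (V k (p k)) * (\<Prod>i\<in>{0..<N}-{k}. V i (p i))))"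
    unfolding pderiv_prod by (simp add: sum_distrib_left mult_ac)
  also have "\<dots> = (\<Sum>k\<in>{0..<N}. \<Sum>p\<in>perms N. signof p * (pderiv (V k (p k)) * (\<Prod>i\<in>{0..<N}-{k}. V i (p i))))"
    by (rule sum.swap)
  also have "\<dots> = (\<Sum>k<N. Dt N (V(k := (\<lambda>j. pderiv (V k j)))))"
    by (auto simp: atLeast0LessThan Dt_upd intro!: sum.cong)
  finally show ?thesis .
qed

lemma Dt_weight:
  fixes V :: "nat \<Rightarrow> nat \<Rightarrow> 'a::comm_ring_1"
  shows "(\<Sum>k<N. Dt N (V(k := (\<lambda>j. (w k + of_nat j) * V k j)))) = ((\<Sum>k<N. w k) + (\<Sum>j<N. of_nat j)) * Dt N V"
proof -
  have "(\<Sum>k<N. Dt N (V(k := (\<lambda>j. (w k + of_nat j) * V k j))))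
     = (\<Sum>k\<in>{0..<N}. \<Sum>p\<in>perms N. signof p * ((w k + of_nat (p k)) * (\<Prod>i=0..<N. V i (p i))))"
  proof (rule sum.cong)
    fix k assume "k \<in> {0..<N}"
    then have k: "k < N" by simp
    show "Dt N (V(k := (\<lambda>j. (w k + of_nat j) * V k j))) = (\<Sum>p\<in>perms N. signof p * ((w k + of_nat (p k)) * (\<Prod>i=0..<N. V i (p i))))"
      unfolding Dt_upd[OF k]
      by (rule sum.cong) (auto simp: prod.remove[of "{0..<N}" k] k mult_ac)
  qed (simp add: atLeast0LessThan)
  also have "\<dots> = (\<Sum>p\<in>perms N. signof p * ((\<Sum>k\<in>{0..<N}. w k + of_nat (p k)) * (\<Prod>i=0..<N. V i (p i))))"
    by (subst sum.swap) (simp add: sum_distrib_left sum_distrib_right mult_ac)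
  also have "\<dots> = (\<Sum>p\<in>perms N. signof p * (((\<Sum>k<N. w k) + (\<Sum>j<N. of_nat j)) * (\<Prod>i=0..<N. V i (p i))))"
  proof (rule sum.cong)
    fix p assume "p \<in> perms N"
    then have p: "p permutes {0..<N}" by simp
    have "(\<Sum>k\<in>{0..<N}. of_nat (p k) :: 'a) = (\<Sum>j\<in>{0..<N}. of_nat j)"
      using sum.permute[OF p, of "of_nat :: nat \<Rightarrow> 'a"] by (simp add: o_def)
    then show "signof p * ((\<Sum>k\<in>{0..<N}. w k + of_nat (p k)) * (\<Prod>i=0..<N. V i (p i))) =
        signof p * (((\<Sum>k<N. w k) + (\<Sum>j<N. of_nat j)) * (\<Prod>i=0..<N. V i (p i)))"
      by (simp add: sum.distrib atLeast0LessThan)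
  qed simp
  also have "\<dots> = ((\<Sum>k<N. w k) + (\<Sum>j<N. of_nat j)) * Dt N V"
    unfolding Dt_leibniz by (simp add: sum_distrib_left mult_ac)
  finally show ?thesis .
qed

lemma Dt_cramer:
  fixes U :: "nat \<Rightarrow> nat \<Rightarrow> 'a::comm_ring_1"
  shows "\<exists>y. \<forall>j<N. Dt N U * v j = (\<Sum>i<N. y i * U i j)"
proof -
  define A where "A = mat N N (\<lambda>(i,j). U i j)"
  have A: "A \<in> carrier_mat N N" unfolding A_def by simp
  note adj = adj_mat[OF A]
  define y where "y i = (\<Sum>l<N. v l * adj_mat A $$ (l, i))" for i
  have "Dt N U * v j = (\<Sum>i<N. y i * U i j)" if j: "j < N" for j
  proof -
    have e: "(adj_mat A * A) $$ (l, j) = (\<Sum>i<N. adj_mat A $$ (l, i) * U i j)" if l: "l < N" for l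
      using adj(1) A l j by (simp add: scalar_prod_def A_def atLeast0LessThan)
    have "(\<Sum>i<N. y i * U i j) = (\<Sum>l<N. v l * (\<Sum>i<N. adj_mat A $$ (l, i) * U i j))"
    proof -
      have "(\<Sum>i<N. y i * U i j) = (\<Sum>i<N. \<Sum>l<N. v l * (adj_mat A $$ (l, i) * U i j))"
        unfolding y_def by (simp add: sum_distrib_right sum_distrib_left mult_ac)
      also have "\<dots> = (\<Sum>l<N. \<Sum>i<N. v l * (adj_mat A $$ (l, i) * U i j))"
        by (rule sum.swap)
      also have "\<dots> = (\<Sum>l<N. v l * (\<Sum>i<N. adj_mat A $$ (l, i) * U i j))"
        by (simp add: sum_distrib_left)
      finally show ?thesis .
    qed
    also have "\<dots> = (\<Sum>l<N. v l * (adj_mat A * A) $$ (l, j))"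
      by (rule sum.cong) (simp_all add: e)
    also have "\<dots> = (\<Sum>l<N. v l * (if l = j then det A else 0))"
      by (rule sum.cong) (use j in \<open>simp_all add: adj(3)\<close>)
    also have "\<dots> = v j * det A" using j by (simp add: if_distrib cong: if_cong)
    finally show ?thesis unfolding Dt_def A_def by (simp add: mult_ac)
  qed
  then show ?thesis by blast
qed


definition goodL :: "nat \<Rightarrow> (nat \<Rightarrow> nat \<Rightarrow> 'a::comm_ring_1) \<Rightarrow> ((nat \<Rightarrow> 'a) \<Rightarrow> 'a) \<Rightarrow> bool" where
  "goodL N V L \<longleftrightarrow> (\<forall>y w. L (\<lambda>j. \<Sum>i<N. y i * w i j) = (\<Sum>i<N. y i * L (w i)))
     \<and> (\<forall>u u'. (\<forall>j<N. u j = u' j) \<longrightarrow> L u = L u') \<and> (\<forall>i<N-2. L (V i) = 0)"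

lemma goodL_lin: "goodL N V L \<Longrightarrow> L (\<lambda>j. \<Sum>i<N. y i * w i j) = (\<Sum>i<N. y i * L (w i))"
  unfolding goodL_def by blast
lemma goodL_cong: "goodL N V L \<Longrightarrow> (\<And>j. j < N \<Longrightarrow> u j = u' j) \<Longrightarrow> L u = L u'"
  unfolding goodL_def by blast
lemma goodL_M: "goodL N V L \<Longrightarrow> i < N - 2 \<Longrightarrow> L (V i) = 0"
  unfolding goodL_def by blast

lemma goodL_smult: assumes g: "goodL N V L" and N: "0 < N"
  shows "L (\<lambda>j. d * c j) = d * L c"
proof -
  have eq: "(\<Sum>i<N. (if i = 0 then d else 0) * c j) = d * c j" for j
  proof -
    have "(\<Sum>i<N. (if i = 0 then d else 0) * c j) = (\<Sum>i<N. (if i = 0 then d * c j else 0))"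
      by (rule sum.cong) auto
    also have "\<dots> = d * c j" using N by simp
    finally show ?thesis .
  qed
  have "L (\<lambda>j. d * c j) = L (\<lambda>j. \<Sum>i<N. (if i = 0 then d else 0) * (\<lambda>i. c) i j)"
    unfolding eq by simp
  also have "\<dots> = (\<Sum>i<N. (if i = 0 then d else 0) * L c)"
    by (rule goodL_lin[OF g])
  also have "\<dots> = (\<Sum>i<N. (if i = 0 then d * L c else 0))"
    by (rule sum.cong) auto
  also have "\<dots> = d * L c" using N by simp
  finally show ?thesis .
qed

lemma sum_split_last2:
  fixes N :: nat
  assumes N: "2 \<le> N" and z: "\<And>i. i < N - 2 \<Longrightarrow> f i = 0"
  shows "(\<Sum>i<N. f i) = f (N-2) + f (N-1)"
proof -
  obtain K where K: "N = Suc (Suc K)" using N by (metis add_2_eq_Suc le_Suc_ex)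
  have "(\<Sum>i<N. f i) = (\<Sum>i<K. f i) + f K + f (Suc K)" unfolding K by simp
  also have "(\<Sum>i<K. f i) = 0" using z K by simp
  finally show ?thesis using K by simp
qed

lemma decomp:
  assumes N: "2 \<le> N" and g: "goodL N V L"
    and dec: "\<And>j. j < N \<Longrightarrow> d * c j = (\<Sum>i<N. y i * (V(N-2 := a, N-1 := b)) i j)"
  shows "d * L c = y (N-2) * L a + y (N-1) * L b"
proof -
  have "d * L c = L (\<lambda>j. d * c j)" using goodL_smult[OF g] N by simp
  also have "\<dots> = L (\<lambda>j. \<Sum>i<N. y i * (V(N-2 := a, N-1 := b)) i j)"
    by (rule goodL_cong[OF g]) (rule dec)
  also have "\<dots> = (\<Sum>i<N. y i * L ((V(N-2 := a, N-1 := b)) i))"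
    by (rule goodL_lin[OF g])
  also have "\<dots> = y (N-2) * L ((V(N-2 := a, N-1 := b)) (N-2)) + y (N-1) * L ((V(N-2 := a, N-1 := b)) (N-1))"
    by (rule sum_split_last2[OF N]) (use goodL_M[OF g] in auto)
  also have "\<dots> = y (N-2) * L a + y (N-1) * L b"
    using N by auto
  finally show ?thesis .
qed

context
  fixes N :: nat and V :: "nat \<Rightarrow> nat \<Rightarrow> 'a::idom"
  assumes N: "2 \<le> N"
begin

definition X where
  "X u v = Dt N (V(N-2 := u, N-1 := v))"

lemma X_twist: "V(N-2 := u, N-1 := v) = V(N-1 := v, N-2 := u)"
  using N by (auto simp: fun_upd_twist)

lemma good2: "goodL N V (\<lambda>v. X u v)"
  unfolding goodL_def X_def
proof (intro conjI allI impI)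
  fix y w
  show "Dt N (V(N - 2 := u, N - 1 := \<lambda>j. \<Sum>i<N. y i * w i j)) = (\<Sum>i<N. y i * Dt N (V(N - 2 := u, N - 1 := w i)))"
    using Dt_upd_sum[of "N-1" N "{..<N}" "V(N-2 := u)" y w] N by simp
next
  fix v v' :: "nat \<Rightarrow> 'a" assume "\<forall>j<N. v j = v' j"
  then show "Dt N (V(N - 2 := u, N - 1 := v)) = Dt N (V(N - 2 := u, N - 1 := v'))"
    by (intro Dt_cong) auto
next
  fix i assume i: "i < N - 2"
  show "Dt N (V(N - 2 := u, N - 1 := V i)) = 0"
    by (rule Dt_dup[of i N "N-1"]) (use i N in auto)
qed

lemma good1: "goodL N V (\<lambda>u. X u v)"
  unfolding goodL_def X_def X_twist
proof (intro conjI allI impI)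
  fix y w
  show "Dt N (V(N - 1 := v, N - 2 := \<lambda>j. \<Sum>i<N. y i * w i j)) = (\<Sum>i<N. y i * Dt N (V(N - 1 := v, N - 2 := w i)))"
    using Dt_upd_sum[of "N-2" N "{..<N}" "V(N-1 := v)" y w] N by simp
next
  fix u u' :: "nat \<Rightarrow> 'a" assume "\<forall>j<N. u j = u' j"
  then show "Dt N (V(N - 1 := v, N - 2 := u)) = Dt N (V(N - 1 := v, N - 2 := u'))"
    by (intro Dt_cong) auto
next
  fix i assume i: "i < N - 2"
  show "Dt N (V(N - 1 := v, N - 2 := V i)) = 0"
    by (rule Dt_dup[of i N "N-2"]) (use i N in auto)
qed

lemma X_alt: "X u u = 0"
  unfolding X_def by (rule Dt_dup[of "N-2" N "N-1"]) (use N in auto)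

lemma X_swap: "X v u = - X u v"
proof -
  let ?t = "Transposition.transpose (N-2) (N-1)"
  have p: "?t permutes {0..<N}" by (rule permutes_swap_id) (use N in auto)
  have "Dt N (\<lambda>i. (V(N-2 := u, N-1 := v)) (?t i)) = signof ?t * X u v"
    unfolding X_def by (rule Dt_perm[OF p])
  moreover have "(\<lambda>i. (V(N-2 := u, N-1 := v)) (?t i)) = V(N-2 := v, N-1 := u)"
    using N by (auto simp: Transposition.transpose_def fun_eq_iff)
  moreover have "signof ?t = (-1 :: 'a)" using N by (simp add: sign_swap_id)
  ultimately show ?thesis unfolding X_def by simp
qed

lemma cramerX: "\<exists>y. \<forall>j<N. X a b * c j = (\<Sum>i<N. y i * (V(N-2 := a, N-1 := b)) i j)"
  unfolding X_def by (rule Dt_cramer)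

lemma plucker:
  assumes gZ: "goodL N V Z"
  shows "X b c * Z a - X a c * Z b + X a b * Z c = 0"
proof (cases "X a b = 0")
  case False
  obtain y where y: "\<And>j. j < N \<Longrightarrow> X a b * c j = (\<Sum>i<N. y i * (V(N-2 := a, N-1 := b)) i j)"
    using cramerX by blast
  have e1: "X a b * X b c = y (N-2) * X b a + y (N-1) * X b b" by (rule decomp[OF N good2 y])
  have e2: "X a b * X a c = y (N-2) * X a a + y (N-1) * X a b" by (rule decomp[OF N good2 y])
  have e3: "X a b * Z c = y (N-2) * Z a + y (N-1) * Z b" by (rule decomp[OF N gZ y])
  have e1': "X a b * X b c = - y (N-2) * X a b" using e1 X_alt[of b] X_swap[of b a] by simp
  have e2': "X a b * X a c = y (N-1) * X a b" using e2 X_alt[of a] by simp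
  have "X a b * (X b c * Z a - X a c * Z b + X a b * Z c) = (X a b * X b c) * Z a - (X a b * X a c) * Z b + X a b * (X a b * Z c)"
    by (simp add: algebra_simps)
  also have "\<dots> = (- y (N-2) * X a b) * Z a - (y (N-1) * X a b) * Z b + X a b * (y (N-2) * Z a + y (N-1) * Z b)"
    unfolding e1' e2' e3 by simp
  also have "\<dots> = 0" by (simp add: algebra_simps)
  finally have "X a b * (X b c * Z a - X a c * Z b + X a b * Z c) = 0" .
  then show ?thesis using False by simp
next
  case ab: True
  show ?thesis
  proof (cases "X a c = 0")
    case False
    obtain y where y: "\<And>j. j < N \<Longrightarrow> X a c * b j = (\<Sum>i<N. y i * (V(N-2 := a, N-1 := c)) i j)"
      using cramerX by blast
    have e1: "X a c * X b c = y (N-2) * X a c + y (N-1) * X c c" by (rule decomp[OF N good1 y])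
    have e2: "X a c * X a b = y (N-2) * X a a + y (N-1) * X a c" by (rule decomp[OF N good2 y])
    have e3: "X a c * Z b = y (N-2) * Z a + y (N-1) * Z c" by (rule decomp[OF N gZ y])
    have y1: "y (N-1) = 0" using e2 ab X_alt[of a] False by simp
    have e1': "X a c * X b c = y (N-2) * X a c" using e1 X_alt[of c] by simp
    have e3': "X a c * Z b = y (N-2) * Z a" using e3 y1 by simp
    have "X a c * (X b c * Z a - X a c * Z b + X a b * Z c) = (X a c * X b c) * Z a - X a c * (X a c * Z b)"
      using ab by (simp add: algebra_simps)
    also have "\<dots> = 0" unfolding e1' e3' by (simp add: algebra_simps)
    finally have "X a c * (X b c * Z a - X a c * Z b + X a b * Z c) = 0" .
    then show ?thesis using False by simp
  next
    case ac: True
    show ?thesis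
    proof (cases "X b c = 0")
      case True then show ?thesis using ab ac by simp
    next
      case False
      obtain y where y: "\<And>j. j < N \<Longrightarrow> X b c * a j = (\<Sum>i<N. y i * (V(N-2 := b, N-1 := c)) i j)"
        using cramerX by blast
      have e1: "X b c * X a b = y (N-2) * X b b + y (N-1) * X c b" by (rule decomp[OF N good1 y])
      have e2: "X b c * X a c = y (N-2) * X b c + y (N-1) * X c c" by (rule decomp[OF N good1 y])
      have e3: "X b c * Z a = y (N-2) * Z b + y (N-1) * Z c" by (rule decomp[OF N gZ y])
      have y1: "y (N-1) = 0" using e1 ab X_alt[of b] X_swap[of c b] False by simp
      have y2: "y (N-2) = 0" using e2 ac X_alt[of c] False by simp
      have "Z a = 0" using e3 y1 y2 False by simp
      then show ?thesis using ab ac by simp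
    qed
  qed
qed

end


definition R :: "int \<Rightarrow> int \<Rightarrow> nat \<Rightarrow> real poly" where
  "R c k = (\<lambda>j. Pi (c + int j - k))"

definition W :: "int \<Rightarrow> nat \<Rightarrow> (nat \<Rightarrow> int) \<Rightarrow> real poly" where
  "W c N ks = Dt N (\<lambda>i. R c (ks i))"

definition Ysum :: "int \<Rightarrow> nat \<Rightarrow> (nat \<Rightarrow> int) \<Rightarrow> real poly" where
  "Ysum c N ks = (\<Sum>i<N. W c N (ks(i := ks i + 2)))"

lemma Dt_swap: assumes "p < N" "q < N" "p \<noteq> q"
  shows "Dt N (V(p := u, q := v)) = - Dt N (V(p := v, q := u))"
proof -
  let ?t = "Transposition.transpose p q"
  have pp: "?t permutes {0..<N}" by (rule permutes_swap_id) (use assms in auto)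
  have "Dt N (\<lambda>i. (V(p := v, q := u)) (?t i)) = signof ?t * Dt N (V(p := v, q := u))"
    by (rule Dt_perm[OF pp])
  moreover have "(\<lambda>i. (V(p := v, q := u)) (?t i)) = V(p := u, q := v)"
    using assms by (auto simp: Transposition.transpose_def fun_eq_iff)
  moreover have "signof ?t = (-1 :: 'a)" using assms by (simp add: sign_swap_id)
  ultimately show ?thesis by simp
qed

lemma of_int_mult_poly: "(of_int m :: real poly) * p = smult (of_int m) p"
  by (simp add: of_int_poly)

lemma W_pderiv: "pderiv (W c N ks) = (\<Sum>i<N. W c N (ks(i := ks i + 1)))"
  unfolding W_def Dt_pderiv
proof (rule sum.cong[OF refl])
  fix k
  show "Dt N ((\<lambda>i. R c (ks i))(k := \<lambda>j. pderiv (R c (ks k) j))) = Dt N (\<lambda>i. R c ((ks(k := ks k + 1)) i))"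
    by (rule arg_cong[where f = "Dt N"]) (auto simp: fun_eq_iff R_def Pi_deriv algebra_simps)
qed

lemma W_Y: "Ysum c N ks = 3 * (of_int (int N * c + (\<Sum>j<N. int j) - (\<Sum>i<N. ks i)) * W c N ks - [:0,1:] * pderiv (W c N ks))"
proof -
  let ?V = "\<lambda>i. R c (ks i)"
  let ?w = "\<lambda>i. (of_int (c - ks i) :: real poly)"
  have row: "(\<lambda>i. R c ((ks(k := ks k + 2)) i)) = ?V(k := (\<lambda>j. 3 * ((?w k + of_nat j) * ?V k j) + (- 3 * [:0,1:]) * pderiv (?V k j)))" for k
  proof -
    have "R c (ks k + 2) j = 3 * ((?w k + of_nat j) * ?V k j) + (- 3 * [:0,1:]) * pderiv (?V k j)" for j
    proof -
      have "R c (ks k + 2) j = Pi ((c + int j - ks k) - 2)" unfolding R_def by (simp add: algebra_simps)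
      also have "\<dots> = smult 3 (smult (of_int (c + int j - ks k)) (Pi (c + int j - ks k)) - [:0,1:] * Pi (c + int j - ks k - 1))"
        by (rule Pi_Y)
      also have "\<dots> = 3 * ((?w k + of_nat j) * ?V k j) + (- 3 * [:0,1:]) * pderiv (?V k j)"
      proof -
        have e: "(?w k + of_nat j) * ?V k j = smult (of_int (c + int j - ks k)) (Pi (c + int j - ks k))"
          by (simp add: of_int_poly of_nat_poly R_def algebra_simps)
        show ?thesis
          unfolding e unfolding R_def Pi_deriv
          by (simp add: numeral_mult_conv_smult algebra_simps smult_diff_right)
      qed
      finally show ?thesis .
    qed
    then show ?thesis by (auto simp: fun_eq_iff)
  qed
  have "Ysum c N ks = (\<Sum>k<N. 3 * Dt N (?V(k := (\<lambda>j. (?w k + of_nat j) * ?V k j))) + (- 3 * [:0,1:]) * Dt N (?V(k := (\<lambda>j. pderiv (?V k j)))))"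
    unfolding Ysum_def W_def row
    by (rule sum.cong[OF refl]) (rule Dt_upd_lin, simp)
  also have "\<dots> = 3 * (\<Sum>k<N. Dt N (?V(k := (\<lambda>j. (?w k + of_nat j) * ?V k j)))) + (- 3 * [:0,1:]) * pderiv (W c N ks)"
    unfolding W_def Dt_pderiv by (simp add: sum.distrib sum_distrib_left)
  also have "(\<Sum>k<N. Dt N (?V(k := (\<lambda>j. (?w k + of_nat j) * ?V k j)))) = ((\<Sum>k<N. ?w k) + (\<Sum>j<N. of_nat j)) * W c N ks"
    unfolding W_def by (rule Dt_weight)
  also have "((\<Sum>k<N. ?w k) + (\<Sum>j<N. of_nat j)) = (of_int (int N * c + (\<Sum>j<N. int j) - (\<Sum>i<N. ks i)) :: real poly)"
    by (simp add: sum_subtractf)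
  also have "\<And>A B C X::real poly. 3 * (A * B) + (- 3 * X) * C = 3 * (A * B - X * C)"
    by (simp add: algebra_simps)
  finally show ?thesis .
qed


definition blk :: "nat \<Rightarrow> int" where "blk i = int i"

lemma W_dup: "i < N \<Longrightarrow> l < N \<Longrightarrow> i \<noteq> l \<Longrightarrow> ks i = ks l \<Longrightarrow> W c N ks = 0"
  unfolding W_def by (rule Dt_dup[of i N l]) auto

lemma sum_split_last1:
  fixes N :: nat
  assumes N: "1 \<le> N" and z: "\<And>i. i < N - 1 \<Longrightarrow> f i = 0"
  shows "(\<Sum>i<N. f i) = f (N-1)"
proof -
  obtain K where K: "N = Suc K" using N by (metis Suc_le_D One_nat_def)
  have "(\<Sum>i<N. f i) = (\<Sum>i<K. f i) + f K" unfolding K by simp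
  also have "(\<Sum>i<K. f i) = 0" using z K by simp
  finally show ?thesis using K by simp
qed

lemma B1: assumes N: "1 \<le> N" shows "pderiv (W c N blk) = W c N (blk(N-1 := int N))"
proof -
  have z: "W c N (blk(i := blk i + 1)) = 0" if "i < N - 1" for i
    by (rule W_dup[of i N "Suc i"]) (use that in \<open>auto simp: blk_def\<close>)
  have "pderiv (W c N blk) = W c N (blk(N-1 := blk (N-1) + 1))"
    unfolding W_pderiv by (rule sum_split_last1[OF N z])
  also have "blk(N-1 := blk (N-1) + 1) = blk(N-1 := int N)" using N by (auto simp: blk_def)
  finally show ?thesis .
qed

lemma B2: assumes N: "2 \<le> N"
  shows "pderiv (W c N (blk(N-1 := int N))) = W c N (blk(N-2 := int N - 1, N-1 := int N)) + W c N (blk(N-1 := int N + 1))"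
proof -
  let ?ks = "blk(N-1 := int N)"
  have z: "W c N (?ks(i := ?ks i + 1)) = 0" if "i < N - 2" for i
    by (rule W_dup[of i N "Suc i"]) (use that in \<open>auto simp: blk_def\<close>)
  have "pderiv (W c N ?ks) = W c N (?ks(N-2 := ?ks (N-2) + 1)) + W c N (?ks(N-1 := ?ks (N-1) + 1))"
    unfolding W_pderiv by (rule sum_split_last2[OF N z])
  also have "?ks(N-2 := ?ks (N-2) + 1) = blk(N-2 := int N - 1, N-1 := int N)" using N by (auto simp: blk_def fun_eq_iff)
  also have "?ks(N-1 := ?ks (N-1) + 1) = blk(N-1 := int N + 1)" using N by (auto simp: blk_def fun_eq_iff)
  finally show ?thesis .
qed

lemma B3: assumes N: "2 \<le> N"
  shows "Ysum c N blk = - W c N (blk(N-2 := int N - 1, N-1 := int N)) + W c N (blk(N-1 := int N + 1))"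
proof -
  have z: "W c N (blk(i := blk i + 2)) = 0" if "i < N - 2" for i
    by (rule W_dup[of i N "Suc (Suc i)"]) (use that in \<open>auto simp: blk_def\<close>)
  have "Ysum c N blk = W c N (blk(N-2 := blk (N-2) + 2)) + W c N (blk(N-1 := blk (N-1) + 2))"
    unfolding Ysum_def by (rule sum_split_last2[OF N z])
  also have "W c N (blk(N-2 := blk (N-2) + 2)) = Dt N ((\<lambda>i. R c (blk i))(N-2 := R c (int N), N-1 := R c (int N - 1)))"
    unfolding W_def using N by (intro arg_cong[where f = "Dt N"]) (auto simp: blk_def fun_eq_iff)
  also have "\<dots> = - Dt N ((\<lambda>i. R c (blk i))(N-2 := R c (int N - 1), N-1 := R c (int N)))"
    by (rule Dt_swap) (use N in auto)
  also have "Dt N ((\<lambda>i. R c (blk i))(N-2 := R c (int N - 1), N-1 := R c (int N))) = W c N (blk(N-2 := int N - 1, N-1 := int N))"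
    unfolding W_def using N by (intro arg_cong[where f = "Dt N"]) (auto simp: blk_def fun_eq_iff)
  also have "blk(N-1 := blk (N-1) + 2) = blk(N-1 := int N + 1)" using N by (auto simp: blk_def fun_eq_iff)
  finally show ?thesis .
qed

lemma blk_N1: "W c 1 (blk(0 := v)) = Pi (c - v)"
proof -
  have "W c 1 (blk(0 := v)) = det (mat 1 1 (\<lambda>(i, j). R c ((blk(0 := v)) i) j))"
    unfolding W_def Dt_def by simp
  also have "\<dots> = Pi (c - v)" by (subst det_single) (auto simp: R_def)
  finally show ?thesis .
qed

lemma blk_1: "W c 1 blk = Pi c"
proof -
  have "blk = blk(0 := 0)" by (auto simp: blk_def fun_eq_iff)
  then show ?thesis using blk_N1[of c 0] by simp
qed

lemma Ysum_1: "Ysum c 1 blk = Pi (c - 2)"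
  unfolding Ysum_def using blk_N1[of c 2] by (simp add: blk_def)

lemma S_eq: assumes N: "2 \<le> N"
  shows "pderiv (pderiv (W c N blk)) - Ysum c N blk = 2 * W c N (blk(N-2 := int N - 1, N-1 := int N))"
proof -
  have N1: "1 \<le> N" using N by simp
  show ?thesis unfolding B1[OF N1] B2[OF N] B3[OF N] by simp
qed

lemma T_eq: assumes N: "1 \<le> N"
  shows "pderiv (pderiv (W c N blk)) + Ysum c N blk = 2 * W c N (blk(N-1 := int N + 1))"
proof (cases "N = 1")
  case True
  have "pderiv (pderiv (W c 1 blk)) = Pi (c - 2)"
    unfolding blk_1 Pi_deriv by (simp add: algebra_simps)
  moreover have "W c 1 (blk(0 := 2)) = Pi (c - 2)" by (rule blk_N1)
  moreover note Ysum_1[of c]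
  ultimately show ?thesis unfolding True by (simp only:) simp
next
  case False
  then have N2: "2 \<le> N" using N by simp
  show ?thesis unfolding B1[OF N] B2[OF N2] B3[OF N2] by simp
qed

lemma S1_eq: "pderiv (pderiv (W c 1 blk)) - Ysum c 1 blk = 0"
  unfolding blk_1 Ysum_1 Pi_deriv by (simp add: algebra_simps)

lemma Ysum_blk: "Ysum c N blk = 3 * (of_int (int N * c) * W c N blk - [:0,1:] * pderiv (W c N blk))"
  unfolding W_Y by (simp add: blk_def)


lemma Emb_gen:
  fixes U :: "nat \<Rightarrow> nat \<Rightarrow> 'a::comm_ring_1"
  assumes k: "k \<le> m"
  shows "Dt (Suc m) (U(m := (\<lambda>j. if j = k then 1 else 0))) = (-1)^(m+k) * Dt m (\<lambda>i j. U i (if j < k then j else Suc j))"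
proof -
  define A where "A = mat (Suc m) (Suc m) (\<lambda>(i,j). (U(m := (\<lambda>j. if j = k then 1 else 0))) i j)"
  have A: "A \<in> carrier_mat (Suc m) (Suc m)" unfolding A_def by simp
  have "det A = (\<Sum>j<Suc m. A $$ (m,j) * cofactor A m j)"
    by (rule laplace_expansion_row[OF A]) simp
  also have "\<dots> = (\<Sum>j<Suc m. if j = k then cofactor A m j else 0)"
    by (rule sum.cong) (auto simp: A_def)
  also have "\<dots> = cofactor A m k" using k by simp
  also have "\<dots> = (-1)^(m+k) * det (mat_delete A m k)" unfolding cofactor_def by simp
  also have "mat_delete A m k = mat m m (\<lambda>(i,j). U i (if j < k then j else Suc j))"
    unfolding mat_delete_def A_def by (rule eq_matI) auto
  finally show ?thesis unfolding Dt_def A_def by simp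
qed

lemma Emb_last:
  fixes U :: "nat \<Rightarrow> nat \<Rightarrow> 'a::comm_ring_1"
  shows "Dt (Suc m) (U(m := (\<lambda>j. if j = m then 1 else 0))) = Dt m U"
proof -
  have "Dt (Suc m) (U(m := (\<lambda>j. if j = m then 1 else 0))) = (-1)^(m+m) * Dt m (\<lambda>i j. U i (if j < m then j else Suc j))"
    by (rule Emb_gen) simp
  also have "Dt m (\<lambda>i j. U i (if j < m then j else Suc j)) = Dt m U"
    by (rule Dt_cong) simp
  finally show ?thesis by (simp add: fun_upd_def flip: mult_2)
qed

lemma Emb_first:
  fixes U :: "nat \<Rightarrow> nat \<Rightarrow> 'a::comm_ring_1"
  shows "Dt (Suc m) (U(m := (\<lambda>j. if j = 0 then 1 else 0))) = (-1)^m * Dt m (\<lambda>i j. U i (Suc j))"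
  using Emb_gen[of 0 m U] by simp

definition BL :: "real poly \<Rightarrow> real poly \<Rightarrow> real poly \<Rightarrow> real poly \<Rightarrow> real poly" where
  "BL s t Ys Yt = (pderiv (pderiv s) - Ys) * t - 2 * pderiv s * pderiv t + s * (pderiv (pderiv t) + Yt)"

lemma BL_use:
  assumes "pderiv (pderiv s) - Ys = A" "pderiv (pderiv t) + Yt = B" "pderiv s = s1" "pderiv t = t1"
  shows "BL s t Ys Yt = A * t - 2 * s1 * t1 + s * B"
proof -
  have "BL s t Ys Yt = (pderiv (pderiv s) - Ys) * t - 2 * pderiv s * pderiv t + s * (pderiv (pderiv t) + Yt)"
    by (simp add: BL_def)
  also have "\<dots> = A * t - 2 * s1 * t1 + s * B" by (simp only: assms(1,2)) (simp only: assms(3,4))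
  finally show ?thesis .
qed

lemma W0: "W c 0 ks = 1" unfolding W_def Dt_def by simp
lemma Ysum0: "Ysum c 0 ks = 0" unfolding Ysum_def by simp

lemma WX: assumes N: "2 \<le> N"
  shows "W c N (blk(N-2 := p, N-1 := q)) = X N (\<lambda>i. R c (blk i)) (R c p) (R c q)"
  unfolding W_def Submission.X_def[OF N] using N by (intro arg_cong[where f = "Dt N"]) (auto simp: fun_eq_iff)

lemma sigma_terms: assumes N: "2 \<le> N"
  shows "W c N blk = X N (\<lambda>i. R c (blk i)) (R c (int N - 2)) (R c (int N - 1))"
    and "pderiv (W c N blk) = X N (\<lambda>i. R c (blk i)) (R c (int N - 2)) (R c (int N))"
    and "pderiv (pderiv (W c N blk)) - Ysum c N blk = 2 * X N (\<lambda>i. R c (blk i)) (R c (int N - 1)) (R c (int N))"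
proof -
  have "blk = blk(N-2 := int N - 2, N-1 := int N - 1)" using N by (auto simp: blk_def fun_eq_iff)
  then show "W c N blk = X N (\<lambda>i. R c (blk i)) (R c (int N - 2)) (R c (int N - 1))"
    using WX[OF N] by metis
  have "blk(N-1 := int N) = blk(N-2 := int N - 2, N-1 := int N)" using N by (auto simp: blk_def fun_eq_iff)
  then show "pderiv (W c N blk) = X N (\<lambda>i. R c (blk i)) (R c (int N - 2)) (R c (int N))"
    using B1[of N c] WX[OF N] N by simp
  show "pderiv (pderiv (W c N blk)) - Ysum c N blk = 2 * X N (\<lambda>i. R c (blk i)) (R c (int N - 1)) (R c (int N))"
    unfolding S_eq[OF N] WX[OF N] ..
qed

lemma E1: "BL (W c m blk) (W (c+1) m blk) (Ysum c m blk) (Ysum (c+1) m blk) = 0"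
proof -
  consider "m = 0" | "m = 1" | "2 \<le> m" by linarith
  then show ?thesis
  proof cases
    case 1 then show ?thesis by (simp add: BL_def W0 Ysum0)
  next
    case 2
    have s1: "pderiv (pderiv (W c m blk)) - Ysum c m blk = 0" using S1_eq[of c] 2 by simp
    have t1: "pderiv (pderiv (W (c+1) m blk)) + Ysum (c+1) m blk = 2 * Pi (c - 1)"
      using T_eq[of 1 "c+1"] blk_N1[of "c+1" 2] 2 by simp
    have d1: "pderiv (W c m blk) = Pi (c - 1)" using B1[of 1 c] blk_N1[of c 1] 2 by simp
    have d2: "pderiv (W (c+1) m blk) = Pi c" using B1[of 1 "c+1"] blk_N1[of "c+1" 1] 2 by simp
    have s0: "W c m blk = Pi c" using blk_1[of c] 2 by simp
    show ?thesis unfolding BL_use[OF s1 t1 d1 d2] unfolding s0 by simp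
  next
    case 3
    let ?N = m
    let ?V = "\<lambda>i. R c (blk i)"
    define Z where "Z u = Dt m ((\<lambda>i. R c (blk i - 1))(m-1 := u))" for u
    have shift: "R (c+1) k = R c (k - 1)" for k unfolding R_def by (simp add: algebra_simps)
    have tz: "W (c+1) m (blk(m-1 := v)) = Z (R c (v - 1))" for v
      unfolding W_def Z_def shift using 3 by (intro arg_cong[where f = "Dt m"]) (auto simp: fun_eq_iff)
    have gZ: "goodL m ?V Z"
      unfolding goodL_def
    proof (intro conjI allI impI)
      fix y w
      show "Z (\<lambda>j. \<Sum>i<m. y i * w i j) = (\<Sum>i<m. y i * Z (w i))"
        unfolding Z_def by (rule Dt_upd_sum) (use 3 in auto)
    next
      fix u u' :: "nat \<Rightarrow> real poly" assume "\<forall>j<m. u j = u' j"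
      then show "Z u = Z u'" unfolding Z_def by (intro Dt_cong) auto
    next
      fix i assume i: "i < m - 2"
      show "Z (?V i) = 0" unfolding Z_def
        by (rule Dt_dup[of "Suc i" m "m-1"]) (use i 3 in \<open>auto simp: blk_def\<close>)
    qed
    have "blk = blk(m-1 := int m - 1)" using 3 by (auto simp: blk_def fun_eq_iff)
    then have t0: "W (c+1) m blk = Z (R c (int m - 2))" using tz[of "int m - 1"] by (metis diff_diff_eq add.commute one_add_one)
    have t1: "pderiv (W (c+1) m blk) = Z (R c (int m - 1))" using B1[of m "c+1"] tz[of "int m"] 3 by simp
    have t2: "pderiv (pderiv (W (c+1) m blk)) + Ysum (c+1) m blk = 2 * Z (R c (int m))"
      using T_eq[of m "c+1"] tz[of "int m + 1"] 3 by simp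
    note s = sigma_terms[OF 3, of c]
    have pl: "X m ?V (R c (int m - 1)) (R c (int m)) * Z (R c (int m - 2)) - X m ?V (R c (int m - 2)) (R c (int m)) * Z (R c (int m - 1))
        + X m ?V (R c (int m - 2)) (R c (int m - 1)) * Z (R c (int m)) = 0"
      by (rule plucker[OF 3 gZ])
    have "BL (W c m blk) (W (c+1) m blk) (Ysum c m blk) (Ysum (c+1) m blk) =
       2 * (X m ?V (R c (int m - 1)) (R c (int m)) * Z (R c (int m - 2)) - X m ?V (R c (int m - 2)) (R c (int m)) * Z (R c (int m - 1))
        + X m ?V (R c (int m - 2)) (R c (int m - 1)) * Z (R c (int m)))"
      unfolding BL_use[OF s(3) t2 s(2) t1] unfolding s(1) t0 by (simp add: algebra_simps)
    then show ?thesis using pl by simp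
  qed
qed


lemma E_gen:
  assumes N: "2 \<le> N" and gZ: "goodL N (\<lambda>i. R c (blk i)) Z"
    and t0: "t = k * Z (R c (int N - 2))"
    and t1: "pderiv t = k * Z (R c (int N - 1))"
    and t2: "pderiv (pderiv t) + Yt = 2 * (k * Z (R c (int N)))"
  shows "BL (W c N blk) t (Ysum c N blk) Yt = 0"
proof -
  let ?V = "\<lambda>i. R c (blk i)"
  note s = sigma_terms[OF N, of c]
  have pl: "X N ?V (R c (int N - 1)) (R c (int N)) * Z (R c (int N - 2)) - X N ?V (R c (int N - 2)) (R c (int N)) * Z (R c (int N - 1))
      + X N ?V (R c (int N - 2)) (R c (int N - 1)) * Z (R c (int N)) = 0"
    by (rule plucker[OF N gZ])
  have "BL (W c N blk) t (Ysum c N blk) Yt =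
     2 * k * (X N ?V (R c (int N - 1)) (R c (int N)) * Z (R c (int N - 2)) - X N ?V (R c (int N - 2)) (R c (int N)) * Z (R c (int N - 1))
      + X N ?V (R c (int N - 2)) (R c (int N - 1)) * Z (R c (int N)))"
    unfolding BL_use[OF s(3) t2 s(2) t1] unfolding s(1) t0 by (simp add: algebra_simps)
  then show ?thesis using pl by simp
qed

lemma E_m0:
  assumes "t = 1" "Yt = 0"
  shows "BL (W c 1 blk) t (Ysum c 1 blk) Yt = 0"
proof -
  have "BL (W c 1 blk) t (Ysum c 1 blk) Yt = 0 * t - 2 * pderiv (W c 1 blk) * 0 + W c 1 blk * 0"
    by (rule BL_use) (use assms S1_eq in simp_all)
  then show ?thesis by simp
qed

lemma E3: "BL (W c (Suc m) blk) (W c m blk) (Ysum c (Suc m) blk) (Ysum c m blk) = 0"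
proof (cases "m = 0")
  case True then show ?thesis using E_m0[of "W c 0 blk" "Ysum c 0 blk" c] by (simp add: W0 Ysum0)
next
  case False
  then have m1: "1 \<le> m" by simp
  let ?N = "Suc m"
  have N: "2 \<le> ?N" using m1 by simp
  let ?V = "\<lambda>i. R c (blk i)"
  let ?e = "\<lambda>j. if j = m then 1 else (0 :: real poly)"
  define Z where "Z u = X ?N ?V u ?e" for u
  have gZ: "goodL ?N ?V Z" unfolding Z_def by (rule good1[OF N])
  have tz: "W c m (blk(m-1 := v)) = Z (R c v)" for v
  proof -
    have "W c m (blk(m-1 := v)) = Dt ?N ((\<lambda>i. R c ((blk(m-1 := v)) i))(m := ?e))"
      unfolding W_def by (rule Emb_last[symmetric])
    also have "\<dots> = Z (R c v)" unfolding Z_def Submission.X_def[OF N]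
      using m1 by (intro arg_cong[where f = "Dt ?N"]) (auto simp: fun_eq_iff)
    finally show ?thesis .
  qed
  have "blk = blk(m-1 := int m - 1)" using m1 by (auto simp: blk_def fun_eq_iff)
  then have t0: "W c m blk = 1 * Z (R c (int ?N - 2))" using tz[of "int m - 1"] by simp
  have t1: "pderiv (W c m blk) = 1 * Z (R c (int ?N - 1))" using B1[OF m1, of c] tz[of "int m"] by simp
  have t2: "pderiv (pderiv (W c m blk)) + Ysum c m blk = 2 * (1 * Z (R c (int ?N)))"
    using T_eq[OF m1, of c] tz[of "int m + 1"] by (simp add: add.commute)
  show ?thesis by (rule E_gen[OF N gZ t0 t1 t2])
qed

lemma E2: "BL (W c (Suc m) blk) (W (c+1) m blk) (Ysum c (Suc m) blk) (Ysum (c+1) m blk) = 0"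
proof (cases "m = 0")
  case True then show ?thesis using E_m0[of "W (c+1) 0 blk" "Ysum (c+1) 0 blk" c] by (simp add: W0 Ysum0)
next
  case False
  then have m1: "1 \<le> m" by simp
  let ?N = "Suc m"
  have N: "2 \<le> ?N" using m1 by simp
  let ?V = "\<lambda>i. R c (blk i)"
  let ?e = "\<lambda>j. if j = 0 then 1 else (0 :: real poly)"
  define Z where "Z u = X ?N ?V u ?e" for u
  define k :: "real poly" where "k = (-1)^m"
  have gZ: "goodL ?N ?V Z" unfolding Z_def by (rule good1[OF N])
  have tz: "W (c+1) m (blk(m-1 := v)) = k * Z (R c v)" for v
  proof -
    have "Dt ?N ((\<lambda>i. R c ((blk(m-1 := v)) i))(m := ?e)) = (-1)^m * Dt m (\<lambda>i j. R c ((blk(m-1 := v)) i) (Suc j))"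
      by (rule Emb_first)
    also have "(\<lambda>i j. R c ((blk(m-1 := v)) i) (Suc j)) = (\<lambda>i. R (c+1) ((blk(m-1 := v)) i))"
      by (auto simp: fun_eq_iff R_def algebra_simps)
    finally have "Dt ?N ((\<lambda>i. R c ((blk(m-1 := v)) i))(m := ?e)) = (-1)^m * W (c+1) m (blk(m-1 := v))"
      unfolding W_def .
    moreover have "Dt ?N ((\<lambda>i. R c ((blk(m-1 := v)) i))(m := ?e)) = Z (R c v)" unfolding Z_def Submission.X_def[OF N]
      using m1 by (intro arg_cong[where f = "Dt ?N"]) (auto simp: fun_eq_iff)
    ultimately have "Z (R c v) = k * W (c+1) m (blk(m-1 := v))" unfolding k_def by simp
    then have "k * Z (R c v) = (k * k) * W (c+1) m (blk(m-1 := v))" by simp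
    also have "k * k = 1" unfolding k_def by (simp flip: power_mult_distrib)
    finally show ?thesis by (simp add: fun_upd_def)
  qed
  have "blk = blk(m-1 := int m - 1)" using m1 by (auto simp: blk_def fun_eq_iff)
  then have t0: "W (c+1) m blk = k * Z (R c (int ?N - 2))" using tz[of "int m - 1"] by simp
  have t1: "pderiv (W (c+1) m blk) = k * Z (R c (int ?N - 1))" using B1[OF m1, of "c+1"] tz[of "int m"] by simp
  have t2: "pderiv (pderiv (W (c+1) m blk)) + Ysum (c+1) m blk = 2 * (k * Z (R c (int ?N)))"
    using T_eq[OF m1, of "c+1"] tz[of "int m + 1"] by (simp add: add.commute)
  show ?thesis by (rule E_gen[OF N gZ t0 t1 t2])
qed


definition Gf :: "real \<Rightarrow> real poly \<Rightarrow> real \<Rightarrow> real" where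
  "Gf \<alpha> A x = exp (- (x ^ 4) / 12 + \<alpha> * x ^ 2) * poly A x"

definition Phi :: "real \<Rightarrow> real poly" where "Phi \<alpha> = [:0, 2 * \<alpha>, 0, -1/3:]"

lemma poly_Phi: "poly (Phi \<alpha>) x = 2 * \<alpha> * x - x ^ 3 / 3"
  unfolding Phi_def by (simp add: algebra_simps power3_eq_cube)

lemma Gf_DERIV: "(Gf \<alpha> A has_real_derivative Gf \<alpha> (Phi \<alpha> * A + pderiv A) x) (at x)"
proof -
  have "((\<lambda>x. exp (- (x ^ 4) / 12 + \<alpha> * x ^ 2) * poly A x) has_real_derivative
     exp (- (x ^ 4) / 12 + \<alpha> * x ^ 2) * (- (4 * x ^ 3) / 12 + \<alpha> * (2 * x)) * poly A x + exp (- (x ^ 4) / 12 + \<alpha> * x ^ 2) * poly (pderiv A) x) (at x)"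
    by (auto intro!: derivative_eq_intros simp: algebra_simps)
  moreover have "exp (- (x ^ 4) / 12 + \<alpha> * x ^ 2) * (- (4 * x ^ 3) / 12 + \<alpha> * (2 * x)) * poly A x + exp (- (x ^ 4) / 12 + \<alpha> * x ^ 2) * poly (pderiv A) x
      = Gf \<alpha> (Phi \<alpha> * A + pderiv A) x"
    unfolding Gf_def by (simp add: poly_Phi algebra_simps)
  ultimately show ?thesis unfolding Gf_def[abs_def] by simp
qed

lemma Gf_deriv: "deriv (Gf \<alpha> A) = Gf \<alpha> (Phi \<alpha> * A + pderiv A)"
  by (rule ext) (rule DERIV_imp_deriv[OF Gf_DERIV])

lemma pderiv_Phi: "poly (pderiv (Phi \<alpha>)) x = 2 * \<alpha> - x ^ 2"
  unfolding Phi_def by (simp add: pderiv_pCons algebra_simps power2_eq_square)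

lemma hirota_Gf:
  fixes A B :: "real poly" and x \<alpha> \<beta> c :: real
  defines "a0 \<equiv> poly A x" and "a1 \<equiv> poly (pderiv A) x" and "a2 \<equiv> poly (pderiv (pderiv A)) x"
    and "b0 \<equiv> poly B x" and "b1 \<equiv> poly (pderiv B) x" and "b2 \<equiv> poly (pderiv (pderiv B)) x"
    and "pa \<equiv> 2 * \<alpha> * x - x ^ 3 / 3" and "pb \<equiv> 2 * \<beta> * x - x ^ 3 / 3"
  shows "hirota_op c (Gf \<alpha> A) (Gf \<beta> B) x = exp (- (x ^ 4) / 12 + \<alpha> * x ^ 2) * exp (- (x ^ 4) / 12 + \<beta> * x ^ 2) *
     (a2 * b0 - 2 * a1 * b1 + a0 * b2 + 2 * (pa - pb) * (a1 * b0 - a0 * b1)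
      + ((pa - pb) ^ 2 + (2 * \<alpha> - x ^ 2) + (2 * \<beta> - x ^ 2)) * a0 * b0
      - x * ((a1 * b0 - a0 * b1) + (pa - pb) * a0 * b0) + c * a0 * b0)"
  unfolding hirota_op_def Gf_deriv
  unfolding Gf_def poly_mult poly_add pderiv_add pderiv_mult poly_Phi pderiv_Phi
    a0_def[symmetric] a1_def[symmetric] a2_def[symmetric] b0_def[symmetric] b1_def[symmetric] b2_def[symmetric]
    pa_def pb_def
  by (simp add: algebra_simps power2_eq_square power3_eq_cube)


abbreviation "brk \<alpha> \<beta> c x a0 a1 a2 b0 b1 b2 \<equiv>
  (a2 * b0 - 2 * a1 * b1 + a0 * b2 + 2 * ((2 * \<alpha> * x - x ^ 3 / 3) - (2 * \<beta> * x - x ^ 3 / 3)) * (a1 * b0 - a0 * b1)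
      + (((2 * \<alpha> * x - x ^ 3 / 3) - (2 * \<beta> * x - x ^ 3 / 3)) ^ 2 + (2 * \<alpha> - x ^ 2) + (2 * \<beta> - x ^ 2)) * a0 * b0
      - x * ((a1 * b0 - a0 * b1) + ((2 * \<alpha> * x - x ^ 3 / 3) - (2 * \<beta> * x - x ^ 3 / 3)) * a0 * b0) + c * a0 * b0)"

lemma alg1: fixes a0 a1 a2 b0 b1 b2 x m n :: real
  shows "brk ((m - (n+1))/2) ((m - n)/2) (m + 2*n + 1) x a0 a1 a2 b0 b1 b2
    = (b2 - 3*(m*n*b0 - x*b1))*a0 - 2*b1*a1 + b0*(a2 + 3*(m*(n+1)*a0 - x*a1))"
  by (simp add: field_simps power2_eq_square power3_eq_cube)

lemma alg2: fixes a0 a1 a2 b0 b1 b2 x m n :: real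
  shows "brk ((m + 1 - n)/2) ((m - (n+1))/2) (m - n) x a0 a1 a2 b0 b1 b2
    = (a2 - 3*((m+1)*n*a0 - x*a1))*b0 - 2*a1*b1 + a0*(b2 + 3*(m*(n+1)*b0 - x*b1))"
  by (simp add: field_simps power2_eq_square power3_eq_cube)

lemma alg3: fixes a0 a1 a2 b0 b1 b2 x m n :: real
  shows "brk ((m - n)/2) ((m + 1 - n)/2) (- 2 * m - n - 1) x a0 a1 a2 b0 b1 b2
    = (b2 - 3*((m+1)*n*b0 - x*b1))*a0 - 2*b1*a1 + b0*(a2 + 3*(m*n*a0 - x*a1))"
  by (simp add: field_simps power2_eq_square power3_eq_cube)

lemma poly_Dt: "poly (Dt N V) x = Dt N (\<lambda>i j. poly (V i j) x)"
  unfolding Dt_leibniz poly_sum poly_mult poly_prod by (simp add: sign_def)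

lemma schur_W: "schur_rect m n x = poly (W (int n) m blk) x"
  unfolding schur_rect_def W_def poly_Dt unfolding R_def poly_Pi Dt_def blk_def
  by (intro arg_cong[where f = det] eq_matI) (auto simp: algebra_simps)

lemma u_Gf: "u_fun m n = Gf ((real m - real n) / 2) (W (int n) m blk)"
  by (rule ext) (simp add: u_fun_def Gf_def schur_W)

lemma poly_BL: fixes c c' :: int and N N' :: nat and x :: real defines "s \<equiv> W c N blk" and "t \<equiv> W c' N' blk" shows "poly (BL s t (Ysum c N blk) (Ysum c' N' blk)) x =
   (poly (pderiv (pderiv s)) x - 3 * (real N * real_of_int c * poly s x - x * poly (pderiv s) x)) * poly t x
   - 2 * poly (pderiv s) x * poly (pderiv t) x
   + poly s x * (poly (pderiv (pderiv t)) x + 3 * (real N' * real_of_int c' * poly t x - x * poly (pderiv t) x))"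
  unfolding BL_def Ysum_blk s_def t_def by (simp add: algebra_simps)

theorem proposition5p8:
  fixes m n :: nat and x :: real
  shows "hirota_op (real m + 2 * real n + 1) (u_fun m (n + 1)) (u_fun m n) x = 0
       \<and> hirota_op (real m - real n) (u_fun (m + 1) n) (u_fun m (n + 1)) x = 0
       \<and> hirota_op (- 2 * real m - real n - 1) (u_fun m n) (u_fun (m + 1) n) x = 0"
proof (intro conjI)
  have ua: "u_fun m (n+1) = Gf ((real m - (real n + 1)) / 2) (W (int n + 1) m blk)"
    unfolding u_Gf by (simp add: add.commute)
  have ub: "u_fun (m+1) n = Gf ((real m + 1 - real n) / 2) (W (int n) (Suc m) blk)"
    unfolding u_Gf by (simp add: add.commute)
  have uc: "u_fun m n = Gf ((real m - real n) / 2) (W (int n) m blk)"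
    by (rule u_Gf)
  show "hirota_op (real m + 2 * real n + 1) (u_fun m (n + 1)) (u_fun m n) x = 0"
    unfolding ua uc hirota_Gf alg1
    using E1[of "int n" m] poly_BL[of "int n" m "int n + 1" m x]
    by (simp add: algebra_simps)
  show "hirota_op (real m - real n) (u_fun (m + 1) n) (u_fun m (n + 1)) x = 0"
    unfolding ua ub hirota_Gf alg2
    using E2[of "int n" m] poly_BL[of "int n" "Suc m" "int n + 1" m x]
    by (simp add: algebra_simps)
  show "hirota_op (- 2 * real m - real n - 1) (u_fun m n) (u_fun (m + 1) n) x = 0"
    unfolding ub uc hirota_Gf alg3
    using E3[of "int n" m] poly_BL[of "int n" "Suc m" "int n" m x]
    by (simp add: algebra_simps)
qed


end
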